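(* Let $\mathfrak g_1,\mathfrak g_2$ be vector spaces and $\mathcal G=\mathfrak g_1\oplus\mathfrak g_2$. There is a one-to-one correspondence between matched pairs of Lie triple systems $(\mathfrak g_1,\mathfrak g_2;\rho_1,\rho_2)$ and strict twilled Lie triple system structures on $\mathcal G$ (with respect to $\mathfrak g_1,\mathfrak g_2$). It sends a matched pair to $\mathcal G$ with the bracket $$[x+u,y+v,z+w]_{\bowtie}=[x,y,z]_{\mathfrak g_1}+D_2(u,v)z+\rho_2(v,w)x-\rho_2(u,w)y+[u,v,w]_{\mathfrak g_2}+D_1(x,y)w+\rho_1(y,z)u-\rho_1(x,z)v,$$ and conversely sends a strict twilled Lie triple system $(\mathcal G,[\cdot,\cdot,\cdot]_{\mathcal G})$ to the restricted brackets on $\mathfrak g_1,\mathfrak g_2$ together with $\rho_1(x,y)u=[u,x,y]_2$ and $\rho_2(u,v)x=[x,u,v]_1$ ($x,y,z\in\mathfrak g_1$, $u,v,w\in\mathfrak g_2$).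
   Context: All vector spaces are over a field of characteristic $0$. A Lie triple system is a vector space with a trilinear bracket $[\cdot,\cdot,\cdot]$ satisfying $[x,x,y]=0$, $[x,y,z]+[y,z,x]+[z,x,y]=0$ and $[x,y,[z,w,t]]=[[x,y,z],w,t]+[z,[x,y,w],t]+[z,w,[x,y,t]]$. A representation of a Lie triple system $\mathfrak g$ on $V$ is a bilinear $\rho:\otimes^2\mathfrak g\to\mathfrak{gl}(V)$ with $D(x,y):=\rho(y,x)-\rho(x,y)$ such that $\rho(z,w)\rho(x,y)-\rho(y,w)\rho(x,z)-\rho(x,[y,z,w])+D(y,z)\rho(x,w)=0$ and $\rho([x,y,z],w)+\rho(z,[x,y,w])=[D(x,y),\rho(z,w)]$. A matched pair $(\mathfrak g_1,\mathfrak g_2;\rho_1,\rho_2)$ consists of Lie triple systems $(\mathfrak g_1,[\cdot,\cdot,\cdot]_{\mathfrak g_1})$, $(\mathfrak g_2,[\cdot,\cdot,\cdot]_{\mathfrak g_2})$, a representation $\rho_1$ of $\mathfrak g_1$ on $\mathfrak g_2$ and a representation $\rho_2$ of $\mathfrak g_2$ on $\mathfrak g_1$, with $D_1(x,y)=\rho_1(y,x)-\rho_1(x,y)$, $D_2(u,v)=\rho_2(v,u)-\rho_2(u,v)$, such that for all $x,y,z\in\mathfrak g_1$, $u,v,w\in\mathfrak g_2$: $\rho_2(u,v)[x,y,z]_{\mathfrak g_1}=[x,y,\rho_2(u,v)z]_{\mathfrak g_1}-\rho_2(D_1(x,y)u,v)z-\rho_2(u,D_1(x,y)v)z$; $[x,y,\rho_2(u,v)z]_{\mathfrak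 g_1}=\rho_2(u,D_1(x,y)v)z+\rho_2(\rho_1(z,y)u,v)x-\rho_2(\rho_1(z,x)u,v)y$; $[\rho_2(u,v)x,y,z]_{\mathfrak g_1}=\rho_2(u,\rho_1(y,z)v)x+D_2(v,\rho_1(x,y)u)z-\rho_2(v,\rho_1(x,z)u)y$; $\rho_1(x,y)[u,v,w]_{\mathfrak g_2}=[u,v,\rho_1(x,y)w]_{\mathfrak g_2}-\rho_1(D_2(u,v)x,y)w-\rho_1(x,D_2(u,v)y)w$; $[u,v,\rho_1(x,y)w]_{\mathfrak g_2}=\rho_1(x,D_2(u,v)y)w+\rho_1(\rho_2(w,v)x,y)u-\rho_1(\rho_2(w,u)x,y)v$; $[\rho_1(x,y)u,v,w]_{\mathfrak g_2}=\rho_1(x,\rho_2(v,w)y)u+D_1(y,\rho_2(u,v)x)w-\rho_1(y,\rho_2(u,w)x)v$. A strict twilled Lie triple system structure on $\mathcal G=\mathfrak g_1\oplus\mathfrak g_2$ is a Lie triple system bracket $[\cdot,\cdot,\cdot]_{\mathcal G}$ on $\mathcal G$ for which $\mathfrak g_1$ and $\mathfrak g_2$ are subalgebras and, writing $[a,b,c]_i$ for the $\mathfrak g_i$-component, $[x,y,w]_1=[u,y,z]_1=[x,v,z]_1=0$ and $[u,v,z]_2=[x,v,w]_2=[u,y,w]_2=0$ for all $x,y,z\in\mathfrak g_1,u,v,w\in\mathfrak g_2$ (i.e. the bracket maps tensors with exactly one $\mathfrak g_2$-factor into $\mathfrak g_2$ and with exactly two $\mathfrak g_2$-factors into $\mathfrak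 g_1$; equivalently the component $\hat\psi$ of bidegree $1|1$ vanishes). *)

theory Defs
  imports Main "HOL.Vector_Spaces" "HOL-Library.Product_Plus"
begin

text \<open>Vector spaces over a field 'k of characteristic 0 are given by a scalar
multiplication s on a type with ab_group_add satisfying the library locale
vector_space.  The direct sum g1 (+) g2 is the product type with
componentwise scalar multiplication.\<close>

definition prod_scale :: "('k \<Rightarrow> 'a \<Rightarrow> 'a) \<Rightarrow> ('k \<Rightarrow> 'b \<Rightarrow> 'b) \<Rightarrow> 'k \<Rightarrow> 'a \<times> 'b \<Rightarrow> 'a \<times> 'b"
  where "prod_scale s1 s2 c p = (s1 c (fst p), s2 c (snd p))"

definition trilinear :: "('k::field \<Rightarrow> 'a::ab_group_add \<Rightarrow> 'a) \<Rightarrow> ('a \<Rightarrow> 'a \<Rightarrow> 'a \<Rightarrow> 'a) \<Rightarrow> bool"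
  where "trilinear s br \<longleftrightarrow>
     (\<forall>y z. Vector_Spaces.linear s s (\<lambda>x. br x y z)) \<and>
     (\<forall>x z. Vector_Spaces.linear s s (\<lambda>y. br x y z)) \<and>
     (\<forall>x y. Vector_Spaces.linear s s (\<lambda>z. br x y z))"

definition is_LTS :: "('k::field \<Rightarrow> 'a::ab_group_add \<Rightarrow> 'a) \<Rightarrow> ('a \<Rightarrow> 'a \<Rightarrow> 'a \<Rightarrow> 'a) \<Rightarrow> bool"
  where "is_LTS s br \<longleftrightarrow> trilinear s br \<and>
     (\<forall>x y. br x x y = 0) \<and>
     (\<forall>x y z. br x y z + br y z x + br z x y = 0) \<and>
     (\<forall>x y z w t. br x y (br z w t) =
        br (br x y z) w t + br z (br x y w) t + br z w (br x y t))"

definition Dmap :: "('a \<Rightarrow> 'a \<Rightarrow> 'v \<Rightarrow> 'v::ab_group_add) \<Rightarrow> 'a \<Rightarrow> 'a \<Rightarrow> 'v \<Rightarrow> 'v"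
  where "Dmap \<rho> x y v = \<rho> y x v - \<rho> x y v"

text \<open>Representation of the Lie triple system (g, br) on V: a bilinear map
rho from g (x) g into gl(V), written curried: rho x y is an endomorphism of V.\<close>
definition is_rep :: "('k::field \<Rightarrow> 'a::ab_group_add \<Rightarrow> 'a) \<Rightarrow> ('a \<Rightarrow> 'a \<Rightarrow> 'a \<Rightarrow> 'a)
      \<Rightarrow> ('k \<Rightarrow> 'v::ab_group_add \<Rightarrow> 'v) \<Rightarrow> ('a \<Rightarrow> 'a \<Rightarrow> 'v \<Rightarrow> 'v) \<Rightarrow> bool"
  where "is_rep s br sV \<rho> \<longleftrightarrow>
     (\<forall>x y. Vector_Spaces.linear sV sV (\<rho> x y)) \<and>
     (\<forall>y v. Vector_Spaces.linear s sV (\<lambda>x. \<rho> x y v)) \<and>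
     (\<forall>x v. Vector_Spaces.linear s sV (\<lambda>y. \<rho> x y v)) \<and>
     (\<forall>x y z w v. \<rho> z w (\<rho> x y v) - \<rho> y w (\<rho> x z v) - \<rho> x (br y z w) v
                    + Dmap \<rho> y z (\<rho> x w v) = 0) \<and>
     (\<forall>x y z w v. \<rho> (br x y z) w v + \<rho> z (br x y w) v
                    = Dmap \<rho> x y (\<rho> z w v) - \<rho> z w (Dmap \<rho> x y v))"

type_synonym ('a, 'b) mp_data =
  "('a \<Rightarrow> 'a \<Rightarrow> 'a \<Rightarrow> 'a) \<times> ('b \<Rightarrow> 'b \<Rightarrow> 'b \<Rightarrow> 'b) \<times> ('a \<Rightarrow> 'a \<Rightarrow> 'b \<Rightarrow> 'b) \<times> ('b \<Rightarrow> 'b \<Rightarrow> 'a \<Rightarrow> 'a)"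

definition is_matched_pair ::
  "('k::field \<Rightarrow> 'a::ab_group_add \<Rightarrow> 'a) \<Rightarrow> ('k \<Rightarrow> 'b::ab_group_add \<Rightarrow> 'b) \<Rightarrow> ('a, 'b) mp_data \<Rightarrow> bool"
  where "is_matched_pair s1 s2 m \<longleftrightarrow>
   (case m of (br1, br2, \<rho>1, \<rho>2) \<Rightarrow>
     is_LTS s1 br1 \<and> is_LTS s2 br2 \<and> is_rep s1 br1 s2 \<rho>1 \<and> is_rep s2 br2 s1 \<rho>2 \<and>
     (\<forall>x y z u v.
        \<rho>2 u v (br1 x y z) = br1 x y (\<rho>2 u v z) - \<rho>2 (Dmap \<rho>1 x y u) v z - \<rho>2 u (Dmap \<rho>1 x y v) z) \<and>
     (\<forall>x y z u v.
        br1 x y (\<rho>2 u v z) = \<rho>2 u (Dmap \<rho>1 x y v) z + \<rho>2 (\<rho>1 z y u) v x - \<rho>2 (\<rho>1 z x u) v y) \<and>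
     (\<forall>x y z u v.
        br1 (\<rho>2 u v x) y z = \<rho>2 u (\<rho>1 y z v) x + Dmap \<rho>2 v (\<rho>1 x y u) z - \<rho>2 v (\<rho>1 x z u) y) \<and>
     (\<forall>x y u v w.
        \<rho>1 x y (br2 u v w) = br2 u v (\<rho>1 x y w) - \<rho>1 (Dmap \<rho>2 u v x) y w - \<rho>1 x (Dmap \<rho>2 u v y) w) \<and>
     (\<forall>x y u v w.
        br2 u v (\<rho>1 x y w) = \<rho>1 x (Dmap \<rho>2 u v y) w + \<rho>1 (\<rho>2 w v x) y u - \<rho>1 (\<rho>2 w u x) y v) \<and>
     (\<forall>x y u v w.
        br2 (\<rho>1 x y u) v w = \<rho>1 x (\<rho>2 v w y) u + Dmap \<rho>1 y (\<rho>2 u v x) w - \<rho>1 y (\<rho>2 u w x) v))"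

definition is_strict_twilled ::
  "('k::field \<Rightarrow> 'a::ab_group_add \<Rightarrow> 'a) \<Rightarrow> ('k \<Rightarrow> 'b::ab_group_add \<Rightarrow> 'b)
    \<Rightarrow> ('a \<times> 'b \<Rightarrow> 'a \<times> 'b \<Rightarrow> 'a \<times> 'b \<Rightarrow> 'a \<times> 'b) \<Rightarrow> bool"
  where "is_strict_twilled s1 s2 B \<longleftrightarrow>
     is_LTS (prod_scale s1 s2) B \<and>
     \<comment> \<open>g1 and g2 are subalgebras\<close>
     (\<forall>x y z. snd (B (x,0) (y,0) (z,0)) = 0) \<and>
     (\<forall>u v w. fst (B (0,u) (0,v) (0,w)) = 0) \<and>
     \<comment> \<open>strictness: the 1|1 component vanishes\<close>
     (\<forall>x y w. fst (B (x,0) (y,0) (0,w)) = 0) \<and>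
     (\<forall>u y z. fst (B (0,u) (y,0) (z,0)) = 0) \<and>
     (\<forall>x v z. fst (B (x,0) (0,v) (z,0)) = 0) \<and>
     (\<forall>u v z. snd (B (0,u) (0,v) (z,0)) = 0) \<and>
     (\<forall>x v w. snd (B (x,0) (0,v) (0,w)) = 0) \<and>
     (\<forall>u y w. snd (B (0,u) (y,0) (0,w)) = 0)"

definition bowtie :: "('a::ab_group_add, 'b::ab_group_add) mp_data
    \<Rightarrow> 'a \<times> 'b \<Rightarrow> 'a \<times> 'b \<Rightarrow> 'a \<times> 'b \<Rightarrow> 'a \<times> 'b"
  where "bowtie m p q r = (case m of (br1, br2, \<rho>1, \<rho>2) \<Rightarrow>
     (case p of (x, u) \<Rightarrow> case q of (y, v) \<Rightarrow> case r of (z, w) \<Rightarrow>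
       (br1 x y z + Dmap \<rho>2 u v z + \<rho>2 v w x - \<rho>2 u w y,
        br2 u v w + Dmap \<rho>1 x y w + \<rho>1 y z u - \<rho>1 x z v)))"

definition restrict_data :: "('a::ab_group_add \<times> 'b::ab_group_add \<Rightarrow> 'a \<times> 'b \<Rightarrow> 'a \<times> 'b \<Rightarrow> 'a \<times> 'b)
    \<Rightarrow> ('a, 'b) mp_data"
  where "restrict_data B =
     (\<lambda>x y z. fst (B (x,0) (y,0) (z,0)),
      \<lambda>u v w. snd (B (0,u) (0,v) (0,w)),
      \<lambda>x y u. snd (B (0,u) (x,0) (y,0)),
      \<lambda>u v x. fst (B (x,0) (0,u) (0,v)))"

end

theory Submission
  imports Defs
begin

lemma addf:
  fixes f :: "'a::ab_group_add \<Rightarrow> 'b::ab_group_add"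
  assumes "\<And>a b. f (a + b) = f a + f b"
  shows "f 0 = 0" "f (- a) = - f a" "f (a - b) = f a - f b"
proof -
  show z: "f 0 = 0" using assms[of 0 0] by simp
  have n: "f (- c) = - f c" for c using assms[of c "-c"] z by (metis neg_eq_iff_add_eq_0 add.right_inverse)
  then show "f (- a) = - f a" .
  show "f (a - b) = f a - f b" using assms[of a "-b"] n[of b] by simp
qed

lemma close: "S = 0 \<Longrightarrow> P - Q = S \<Longrightarrow> P = (Q::'a::ab_group_add)"
  by simp

locale mpl =
  fixes b1 :: "'a::ab_group_add \<Rightarrow> 'a \<Rightarrow> 'a \<Rightarrow> 'a" and b2 :: "'b::ab_group_add \<Rightarrow> 'b \<Rightarrow> 'b \<Rightarrow> 'b"
    and r1 :: "'a \<Rightarrow> 'a \<Rightarrow> 'b \<Rightarrow> 'b" and r2 :: "'b \<Rightarrow> 'b \<Rightarrow> 'a \<Rightarrow> 'a"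
  assumes b1a1: "b1 (a + a') y z = b1 a y z + b1 a' y z"
    and b1a2: "b1 x (a + a') z = b1 x a z + b1 x a' z"
    and b1a3: "b1 x y (a + a') = b1 x y a + b1 x y a'"
    and b2a1: "b2 (c + c') v w = b2 c v w + b2 c' v w"
    and b2a2: "b2 u (c + c') w = b2 u c w + b2 u c' w"
    and b2a3: "b2 u v (c + c') = b2 u v c + b2 u v c'"
    and r1a1: "r1 (a + a') y w = r1 a y w + r1 a' y w"
    and r1a2: "r1 x (a + a') w = r1 x a w + r1 x a' w"
    and r1a3: "r1 x y (c + c') = r1 x y c + r1 x y c'"
    and r2a1: "r2 (c + c') v z = r2 c v z + r2 c' v z"
    and r2a2: "r2 u (c + c') z = r2 u c z + r2 u c' z"
    and r2a3: "r2 u v (a + a') = r2 u v a + r2 u v a'"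
begin

lemmas b1z1 = addf[of "\<lambda>a. b1 a y z" for y z, OF b1a1]
lemmas b1z2 = addf[of "\<lambda>a. b1 x a z" for x z, OF b1a2]
lemmas b1z3 = addf[of "\<lambda>a. b1 x y a" for x y, OF b1a3]
lemmas b2z1 = addf[of "\<lambda>a. b2 a y z" for y z, OF b2a1]
lemmas b2z2 = addf[of "\<lambda>a. b2 x a z" for x z, OF b2a2]
lemmas b2z3 = addf[of "\<lambda>a. b2 x y a" for x y, OF b2a3]
lemmas r1z1 = addf[of "\<lambda>a. r1 a y z" for y z, OF r1a1]
lemmas r1z2 = addf[of "\<lambda>a. r1 x a z" for x z, OF r1a2]
lemmas r1z3 = addf[of "\<lambda>a. r1 x y a" for x y, OF r1a3]
lemmas r2z1 = addf[of "\<lambda>a. r2 a y z" for y z, OF r2a1]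
lemmas r2z2 = addf[of "\<lambda>a. r2 x a z" for x z, OF r2a2]
lemmas r2z3 = addf[of "\<lambda>a. r2 x y a" for x y, OF r2a3]

lemmas lin = b1a1 b1a2 b1a3 b2a1 b2a2 b2a3 r1a1 r1a2 r1a3 r2a1 r2a2 r2a3
  b1z1 b1z2 b1z3 b2z1 b2z2 b2z3 r1z1 r1z2 r1z3 r2z1 r2z2 r2z3

lemmas zeros = b1z1(1) b1z2(1) b1z3(1) b2z1(1) b2z2(1) b2z3(1) r1z1(1) r1z2(1) r1z3(1) r2z1(1) r2z2(1) r2z3(1)

abbreviation "bt \<equiv> bowtie (b1, b2, r1, r2)"

end

locale mpl_lts = mpl +
  assumes b1xx: "b1 x x y = 0" and b1jac: "b1 x y z + b1 y z x + b1 z x y = 0"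
    and b2xx: "b2 u u v = 0" and b2jac: "b2 u v w + b2 v w u + b2 w u v = 0"
begin

lemma b1anti: "b1 x y z + b1 y x z = 0"
  proof -
  have "b1 (x + y) (x + y) z = 0" by (rule b1xx)
  then show ?thesis by (simp only: b1a1 b1a2) (simp add: b1xx add.commute)
qed
lemma b2anti: "b2 x y z + b2 y x z = 0"
  proof -
  have "b2 (x + y) (x + y) z = 0" by (rule b2xx)
  then show ?thesis by (simp only: b2a1 b2a2) (simp add: b2xx add.commute)
qed

lemmas free = b1anti b1jac b2anti b2jac

end

locale mpl_mp = mpl_lts +
  assumes ax_mp1: "\<And>x y z u v. r2 u v (b1 x y z) - (b1 x y (r2 u v z) - r2 (Dmap r1 x y u) v z - r2 u (Dmap r1 x y v) z) = 0"
  and ax_mp2: "\<And>x y z u v. b1 x y (r2 u v z) - (r2 u (Dmap r1 x y v) z + r2 (r1 z y u) v x - r2 (r1 z x u) v y) = 0"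
  and ax_mp3: "\<And>x y z u v. b1 (r2 u v x) y z - (r2 u (r1 y z v) x + Dmap r2 v (r1 x y u) z - r2 v (r1 x z u) y) = 0"
  and ax_mp4: "\<And>x y u v w. r1 x y (b2 u v w) - (b2 u v (r1 x y w) - r1 (Dmap r2 u v x) y w - r1 x (Dmap r2 u v y) w) = 0"
  and ax_mp5: "\<And>x y u v w. b2 u v (r1 x y w) - (r1 x (Dmap r2 u v y) w + r1 (r2 w v x) y u - r1 (r2 w u x) y v) = 0"
  and ax_mp6: "\<And>x y u v w. b2 (r1 x y u) v w - (r1 x (r2 v w y) u + Dmap r1 y (r2 u v x) w - r1 y (r2 u w x) v) = 0"
  and ax_rep1a: "\<And>x y z w v. r1 z w (r1 x y v) - r1 y w (r1 x z v) - r1 x (b1 y z w) v + Dmap r1 y z (r1 x w v) = 0"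
  and ax_rep1b: "\<And>x y z w v. r1 (b1 x y z) w v + r1 z (b1 x y w) v - (Dmap r1 x y (r1 z w v) - r1 z w (Dmap r1 x y v)) = 0"
  and ax_rep2a: "\<And>x y z w v. r2 z w (r2 x y v) - r2 y w (r2 x z v) - r2 x (b2 y z w) v + Dmap r2 y z (r2 x w v) = 0"
  and ax_rep2b: "\<And>x y z w v. r2 (b2 x y z) w v + r2 z (b2 x y w) v - (Dmap r2 x y (r2 z w v) - r2 z w (Dmap r2 x y v)) = 0"
  and ax_ltsb1: "\<And>x y z w t. b1 x y (b1 z w t) - (b1 (b1 x y z) w t + b1 z (b1 x y w) t + b1 z w (b1 x y t)) = 0"
  and ax_ltsb2: "\<And>x y z w t. b2 x y (b2 z w t) - (b2 (b2 x y z) w t + b2 z (b2 x y w) t + b2 z w (b2 x y t)) = 0"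
begin
lemmas axs = ax_mp1 ax_mp2 ax_mp3 ax_mp4 ax_mp5 ax_mp6 ax_rep1a ax_rep1b ax_rep2a ax_rep2b ax_ltsb1 ax_ltsb2
lemma fi_11111: "bt (x0, 0) (x1, 0) (bt (x2, 0) (x3, 0) (x4, 0)) = bt (bt (x0, 0) (x1, 0) (x2, 0)) (x3, 0) (x4, 0) + bt (x2, 0) (bt (x0, 0) (x1, 0) (x3, 0)) (x4, 0) + bt (x2, 0) (x3, 0) (bt (x0, 0) (x1, 0) (x4, 0))"
  apply (rule prod_eqI)
  subgoal
    apply (rule close[where S="(b1 x0 x1 (b1 x2 x3 x4) - (b1 (b1 x0 x1 x2) x3 x4 + b1 x2 (b1 x0 x1 x3) x4 + b1 x2 x3 (b1 x0 x1 x4)))"])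
     apply (simp only: axs free zeros, simp)
    apply (simp add: bowtie_def Dmap_def lin algebra_simps)
    done
  subgoal
    by (simp add: bowtie_def Dmap_def zeros)
  done

lemma fi_11112: "bt (x0, 0) (x1, 0) (bt (x2, 0) (x3, 0) (0, u0)) = bt (bt (x0, 0) (x1, 0) (x2, 0)) (x3, 0) (0, u0) + bt (x2, 0) (bt (x0, 0) (x1, 0) (x3, 0)) (0, u0) + bt (x2, 0) (x3, 0) (bt (x0, 0) (x1, 0) (0, u0))"
  apply (rule prod_eqI)
  subgoal
    by (simp add: bowtie_def Dmap_def zeros)
  subgoal
    apply (rule close[where S="((r1 (b1 x0 x1 x2) x3 u0 + r1 x2 (b1 x0 x1 x3) u0 - (Dmap r1 x0 x1 (r1 x2 x3 u0) - r1 x2 x3 (Dmap r1 x0 x1 u0)))) - ((r1 (b1 x0 x1 x3) x2 u0 + r1 x3 (b1 x0 x1 x2) u0 - (Dmap r1 x0 x1 (r1 x3 x2 u0) - r1 x3 x2 (Dmap r1 x0 x1 u0))))"])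
     apply (simp only: axs free zeros, simp)
    apply (simp add: bowtie_def Dmap_def lin algebra_simps)
    done
  done

lemma fi_11121: "bt (x0, 0) (x1, 0) (bt (x2, 0) (0, u0) (x3, 0)) = bt (bt (x0, 0) (x1, 0) (x2, 0)) (0, u0) (x3, 0) + bt (x2, 0) (bt (x0, 0) (x1, 0) (0, u0)) (x3, 0) + bt (x2, 0) (0, u0) (bt (x0, 0) (x1, 0) (x3, 0))"
  apply (rule prod_eqI)
  subgoal
    by (simp add: bowtie_def Dmap_def zeros)
  subgoal
    apply (rule close[where S="(r1 (b1 x0 x1 x2) x3 u0 + r1 x2 (b1 x0 x1 x3) u0 - (Dmap r1 x0 x1 (r1 x2 x3 u0) - r1 x2 x3 (Dmap r1 x0 x1 u0)))"])
     apply (simp only: axs free zeros, simp)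
    apply (simp add: bowtie_def Dmap_def lin algebra_simps)
    done
  done

lemma fi_11122: "bt (x0, 0) (x1, 0) (bt (x2, 0) (0, u0) (0, u1)) = bt (bt (x0, 0) (x1, 0) (x2, 0)) (0, u0) (0, u1) + bt (x2, 0) (bt (x0, 0) (x1, 0) (0, u0)) (0, u1) + bt (x2, 0) (0, u0) (bt (x0, 0) (x1, 0) (0, u1))"
  apply (rule prod_eqI)
  subgoal
    apply (rule close[where S="(0) - ((r2 u0 u1 (b1 x0 x1 x2) - (b1 x0 x1 (r2 u0 u1 x2) - r2 (Dmap r1 x0 x1 u0) u1 x2 - r2 u0 (Dmap r1 x0 x1 u1) x2)))"])
     apply (simp only: axs free zeros, simp)
    apply (simp add: bowtie_def Dmap_def lin algebra_simps)
    done
  subgoal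
    by (simp add: bowtie_def Dmap_def zeros)
  done

lemma fi_11211: "bt (x0, 0) (x1, 0) (bt (0, u0) (x2, 0) (x3, 0)) = bt (bt (x0, 0) (x1, 0) (0, u0)) (x2, 0) (x3, 0) + bt (0, u0) (bt (x0, 0) (x1, 0) (x2, 0)) (x3, 0) + bt (0, u0) (x2, 0) (bt (x0, 0) (x1, 0) (x3, 0))"
  apply (rule prod_eqI)
  subgoal
    by (simp add: bowtie_def Dmap_def zeros)
  subgoal
    apply (rule close[where S="(0) - ((r1 (b1 x0 x1 x2) x3 u0 + r1 x2 (b1 x0 x1 x3) u0 - (Dmap r1 x0 x1 (r1 x2 x3 u0) - r1 x2 x3 (Dmap r1 x0 x1 u0))))"])
     apply (simp only: axs free zeros, simp)
    apply (simp add: bowtie_def Dmap_def lin algebra_simps)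
    done
  done

lemma fi_11212: "bt (x0, 0) (x1, 0) (bt (0, u0) (x2, 0) (0, u1)) = bt (bt (x0, 0) (x1, 0) (0, u0)) (x2, 0) (0, u1) + bt (0, u0) (bt (x0, 0) (x1, 0) (x2, 0)) (0, u1) + bt (0, u0) (x2, 0) (bt (x0, 0) (x1, 0) (0, u1))"
  apply (rule prod_eqI)
  subgoal
    apply (rule close[where S="(r2 u0 u1 (b1 x0 x1 x2) - (b1 x0 x1 (r2 u0 u1 x2) - r2 (Dmap r1 x0 x1 u0) u1 x2 - r2 u0 (Dmap r1 x0 x1 u1) x2))"])
     apply (simp only: axs free zeros, simp)
    apply (simp add: bowtie_def Dmap_def lin algebra_simps)
    done
  subgoal
    by (simp add: bowtie_def Dmap_def zeros)
  done

lemma fi_11221: "bt (x0, 0) (x1, 0) (bt (0, u0) (0, u1) (x2, 0)) = bt (bt (x0, 0) (x1, 0) (0, u0)) (0, u1) (x2, 0) + bt (0, u0) (bt (x0, 0) (x1, 0) (0, u1)) (x2, 0) + bt (0, u0) (0, u1) (bt (x0, 0) (x1, 0) (x2, 0))"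
  apply (rule prod_eqI)
  subgoal
    apply (rule close[where S="((r2 u0 u1 (b1 x0 x1 x2) - (b1 x0 x1 (r2 u0 u1 x2) - r2 (Dmap r1 x0 x1 u0) u1 x2 - r2 u0 (Dmap r1 x0 x1 u1) x2))) - ((r2 u1 u0 (b1 x0 x1 x2) - (b1 x0 x1 (r2 u1 u0 x2) - r2 (Dmap r1 x0 x1 u1) u0 x2 - r2 u1 (Dmap r1 x0 x1 u0) x2)))"])
     apply (simp only: axs free zeros, simp)
    apply (simp add: bowtie_def Dmap_def lin algebra_simps)
    done
  subgoal
    by (simp add: bowtie_def Dmap_def zeros)
  done

lemma fi_11222: "bt (x0, 0) (x1, 0) (bt (0, u0) (0, u1) (0, u2)) = bt (bt (x0, 0) (x1, 0) (0, u0)) (0, u1) (0, u2) + bt (0, u0) (bt (x0, 0) (x1, 0) (0, u1)) (0, u2) + bt (0, u0) (0, u1) (bt (x0, 0) (x1, 0) (0, u2))"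
  apply (rule prod_eqI)
  subgoal
    by (simp add: bowtie_def Dmap_def zeros)
  subgoal
    apply (rule close[where S="((r1 x1 x0 (b2 u0 u1 u2) - (b2 u0 u1 (r1 x1 x0 u2) - r1 (Dmap r2 u0 u1 x1) x0 u2 - r1 x1 (Dmap r2 u0 u1 x0) u2)) + (b2 u2 u0 (r1 x1 x0 u1) - (r1 x1 (Dmap r2 u2 u0 x0) u1 + r1 (r2 u1 u0 x1) x0 u2 - r1 (r2 u1 u2 x1) x0 u0)) + (b2 (r1 x0 x1 u0) u1 u2 - (r1 x0 (r2 u1 u2 x1) u0 + Dmap r1 x1 (r2 u0 u1 x0) u2 - r1 x1 (r2 u0 u2 x0) u1)) + (b2 (r1 x1 x0 u1) u2 u0 - (r1 x1 (r2 u2 u0 x0) u1 + Dmap r1 x0 (r2 u1 u2 x1) u0 - r1 x0 (r2 u1 u0 x1) u2)) + ((b2 (r1 x0 x1 u1) u0 u2 + b2 u0 (r1 x0 x1 u1) u2))) - ((r1 x0 x1 (b2 u0 u1 u2) - (b2 u0 u1 (r1 x0 x1 u2) - r1 (Dmap r2 u0 u1 x0) x1 u2 - r1 x0 (Dmap r2 u0 u1 x1) u2)) + (b2 (r1 x0 x1 u1) u0 u2 - (r1 x0 (r2 u0 u2 x1) u1 + Dmap r1 x1 (r2 u1 u0 x0) u2 - r1 x1 (r2 u1 u2 x0) u0)) + (b2 (r1 x1 x0 u0) u1 u2 - (r1 x1 (r2 u1 u2 x0) u0 + Dmap r1 x0 (r2 u0 u1 x1) u2 - r1 x0 (r2 u0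 u2 x1) u1)) + ((b2 (r1 x1 x0 u1) u2 u0 + b2 u2 u0 (r1 x1 x0 u1) + b2 u0 (r1 x1 x0 u1) u2)))"])
     apply (simp only: axs free zeros, simp)
    apply (simp add: bowtie_def Dmap_def lin algebra_simps)
    done
  done

lemma fi_12111: "bt (x0, 0) (0, u0) (bt (x1, 0) (x2, 0) (x3, 0)) = bt (bt (x0, 0) (0, u0) (x1, 0)) (x2, 0) (x3, 0) + bt (x1, 0) (bt (x0, 0) (0, u0) (x2, 0)) (x3, 0) + bt (x1, 0) (x2, 0) (bt (x0, 0) (0, u0) (x3, 0))"
  apply (rule prod_eqI)
  subgoal
    by (simp add: bowtie_def Dmap_def zeros)
  subgoal
    apply (rule close[where S="(r1 x2 x3 (r1 x0 x1 u0) - r1 x1 x3 (r1 x0 x2 u0) - r1 x0 (b1 x1 x2 x3) u0 + Dmap r1 x1 x2 (r1 x0 x3 u0))"])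
     apply (simp only: axs free zeros, simp)
    apply (simp add: bowtie_def Dmap_def lin algebra_simps)
    done
  done

lemma fi_12112: "bt (x0, 0) (0, u0) (bt (x1, 0) (x2, 0) (0, u1)) = bt (bt (x0, 0) (0, u0) (x1, 0)) (x2, 0) (0, u1) + bt (x1, 0) (bt (x0, 0) (0, u0) (x2, 0)) (0, u1) + bt (x1, 0) (x2, 0) (bt (x0, 0) (0, u0) (0, u1))"
  apply (rule prod_eqI)
  subgoal
    apply (rule close[where S="(0) - ((b1 x1 x2 (r2 u0 u1 x0) - (r2 u0 (Dmap r1 x1 x2 u1) x0 + r2 (r1 x0 x2 u0) u1 x1 - r2 (r1 x0 x1 u0) u1 x2)))"])
     apply (simp only: axs free zeros, simp)
    apply (simp add: bowtie_def Dmap_def lin algebra_simps)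
    done
  subgoal
    by (simp add: bowtie_def Dmap_def zeros)
  done

lemma fi_12121: "bt (x0, 0) (0, u0) (bt (x1, 0) (0, u1) (x2, 0)) = bt (bt (x0, 0) (0, u0) (x1, 0)) (0, u1) (x2, 0) + bt (x1, 0) (bt (x0, 0) (0, u0) (0, u1)) (x2, 0) + bt (x1, 0) (0, u1) (bt (x0, 0) (0, u0) (x2, 0))"
  apply (rule prod_eqI)
  subgoal
    apply (rule close[where S="((b1 (r2 u0 u1 x0) x1 x2 - (r2 u0 (r1 x1 x2 u1) x0 + Dmap r2 u1 (r1 x0 x1 u0) x2 - r2 u1 (r1 x0 x2 u0) x1))) - (((b1 x1 (r2 u0 u1 x0) x2 + b1 (r2 u0 u1 x0) x1 x2)))"])
     apply (simp only: axs free zeros, simp)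
    apply (simp add: bowtie_def Dmap_def lin algebra_simps)
    done
  subgoal
    by (simp add: bowtie_def Dmap_def zeros)
  done

lemma fi_12122: "bt (x0, 0) (0, u0) (bt (x1, 0) (0, u1) (0, u2)) = bt (bt (x0, 0) (0, u0) (x1, 0)) (0, u1) (0, u2) + bt (x1, 0) (bt (x0, 0) (0, u0) (0, u1)) (0, u2) + bt (x1, 0) (0, u1) (bt (x0, 0) (0, u0) (0, u2))"
  apply (rule prod_eqI)
  subgoal
    by (simp add: bowtie_def Dmap_def zeros)
  subgoal
    apply (rule close[where S="(b2 (r1 x0 x1 u0) u1 u2 - (r1 x0 (r2 u1 u2 x1) u0 + Dmap r1 x1 (r2 u0 u1 x0) u2 - r1 x1 (r2 u0 u2 x0) u1))"])
     apply (simp only: axs free zeros, simp)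
    apply (simp add: bowtie_def Dmap_def lin algebra_simps)
    done
  done

lemma fi_12211: "bt (x0, 0) (0, u0) (bt (0, u1) (x1, 0) (x2, 0)) = bt (bt (x0, 0) (0, u0) (0, u1)) (x1, 0) (x2, 0) + bt (0, u1) (bt (x0, 0) (0, u0) (x1, 0)) (x2, 0) + bt (0, u1) (x1, 0) (bt (x0, 0) (0, u0) (x2, 0))"
  apply (rule prod_eqI)
  subgoal
    apply (rule close[where S="(0) - ((b1 (r2 u0 u1 x0) x1 x2 - (r2 u0 (r1 x1 x2 u1) x0 + Dmap r2 u1 (r1 x0 x1 u0) x2 - r2 u1 (r1 x0 x2 u0) x1)))"])
     apply (simp only: axs free zeros, simp)
    apply (simp add: bowtie_def Dmap_def lin algebra_simps)
    done
  subgoal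
    by (simp add: bowtie_def Dmap_def zeros)
  done

lemma fi_12212: "bt (x0, 0) (0, u0) (bt (0, u1) (x1, 0) (0, u2)) = bt (bt (x0, 0) (0, u0) (0, u1)) (x1, 0) (0, u2) + bt (0, u1) (bt (x0, 0) (0, u0) (x1, 0)) (0, u2) + bt (0, u1) (x1, 0) (bt (x0, 0) (0, u0) (0, u2))"
  apply (rule prod_eqI)
  subgoal
    by (simp add: bowtie_def Dmap_def zeros)
  subgoal
    apply (rule close[where S="(((b2 (r1 x0 x1 u0) u2 u1 + b2 u2 u1 (r1 x0 x1 u0) + b2 u1 (r1 x0 x1 u0) u2))) - ((b2 u2 u1 (r1 x0 x1 u0) - (r1 x0 (Dmap r2 u2 u1 x1) u0 + r1 (r2 u0 u1 x0) x1 u2 - r1 (r2 u0 u2 x0) x1 u1)) + (b2 (r1 x0 x1 u0) u2 u1 - (r1 x0 (r2 u2 u1 x1) u0 + Dmap r1 x1 (r2 u0 u2 x0) u1 - r1 x1 (r2 u0 u1 x0) u2)))"])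
     apply (simp only: axs free zeros, simp)
    apply (simp add: bowtie_def Dmap_def lin algebra_simps)
    done
  done

lemma fi_12221: "bt (x0, 0) (0, u0) (bt (0, u1) (0, u2) (x1, 0)) = bt (bt (x0, 0) (0, u0) (0, u1)) (0, u2) (x1, 0) + bt (0, u1) (bt (x0, 0) (0, u0) (0, u2)) (x1, 0) + bt (0, u1) (0, u2) (bt (x0, 0) (0, u0) (x1, 0))"
  apply (rule prod_eqI)
  subgoal
    by (simp add: bowtie_def Dmap_def zeros)
  subgoal
    apply (rule close[where S="(b2 u1 u2 (r1 x0 x1 u0) - (r1 x0 (Dmap r2 u1 u2 x1) u0 + r1 (r2 u0 u2 x0) x1 u1 - r1 (r2 u0 u1 x0) x1 u2))"])
     apply (simp only: axs free zeros, simp)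
    apply (simp add: bowtie_def Dmap_def lin algebra_simps)
    done
  done

lemma fi_12222: "bt (x0, 0) (0, u0) (bt (0, u1) (0, u2) (0, u3)) = bt (bt (x0, 0) (0, u0) (0, u1)) (0, u2) (0, u3) + bt (0, u1) (bt (x0, 0) (0, u0) (0, u2)) (0, u3) + bt (0, u1) (0, u2) (bt (x0, 0) (0, u0) (0, u3))"
  apply (rule prod_eqI)
  subgoal
    apply (rule close[where S="(0) - ((r2 u2 u3 (r2 u0 u1 x0) - r2 u1 u3 (r2 u0 u2 x0) - r2 u0 (b2 u1 u2 u3) x0 + Dmap r2 u1 u2 (r2 u0 u3 x0)))"])
     apply (simp only: axs free zeros, simp)
    apply (simp add: bowtie_def Dmap_def lin algebra_simps)
    done
  subgoal
    by (simp add: bowtie_def Dmap_def zeros)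
  done

lemma fi_21111: "bt (0, u0) (x0, 0) (bt (x1, 0) (x2, 0) (x3, 0)) = bt (bt (0, u0) (x0, 0) (x1, 0)) (x2, 0) (x3, 0) + bt (x1, 0) (bt (0, u0) (x0, 0) (x2, 0)) (x3, 0) + bt (x1, 0) (x2, 0) (bt (0, u0) (x0, 0) (x3, 0))"
  apply (rule prod_eqI)
  subgoal
    by (simp add: bowtie_def Dmap_def zeros)
  subgoal
    apply (rule close[where S="(0) - ((r1 x2 x3 (r1 x0 x1 u0) - r1 x1 x3 (r1 x0 x2 u0) - r1 x0 (b1 x1 x2 x3) u0 + Dmap r1 x1 x2 (r1 x0 x3 u0)))"])
     apply (simp only: axs free zeros, simp)
    apply (simp add: bowtie_def Dmap_def lin algebra_simps)
    done
  done

lemma fi_21112: "bt (0, u0) (x0, 0) (bt (x1, 0) (x2, 0) (0, u1)) = bt (bt (0, u0) (x0, 0) (x1, 0)) (x2, 0) (0, u1) + bt (x1, 0) (bt (0, u0) (x0, 0) (x2, 0)) (0, u1) + bt (x1, 0) (x2, 0) (bt (0, u0) (x0, 0) (0, u1))"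
  apply (rule prod_eqI)
  subgoal
    apply (rule close[where S="(b1 x1 x2 (r2 u0 u1 x0) - (r2 u0 (Dmap r1 x1 x2 u1) x0 + r2 (r1 x0 x2 u0) u1 x1 - r2 (r1 x0 x1 u0) u1 x2))"])
     apply (simp only: axs free zeros, simp)
    apply (simp add: bowtie_def Dmap_def lin algebra_simps)
    done
  subgoal
    by (simp add: bowtie_def Dmap_def zeros)
  done

lemma fi_21121: "bt (0, u0) (x0, 0) (bt (x1, 0) (0, u1) (x2, 0)) = bt (bt (0, u0) (x0, 0) (x1, 0)) (0, u1) (x2, 0) + bt (x1, 0) (bt (0, u0) (x0, 0) (0, u1)) (x2, 0) + bt (x1, 0) (0, u1) (bt (0, u0) (x0, 0) (x2, 0))"
  apply (rule prod_eqI)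
  subgoal
    apply (rule close[where S="(((b1 x1 (r2 u0 u1 x0) x2 + b1 (r2 u0 u1 x0) x1 x2))) - ((b1 (r2 u0 u1 x0) x1 x2 - (r2 u0 (r1 x1 x2 u1) x0 + Dmap r2 u1 (r1 x0 x1 u0) x2 - r2 u1 (r1 x0 x2 u0) x1)))"])
     apply (simp only: axs free zeros, simp)
    apply (simp add: bowtie_def Dmap_def lin algebra_simps)
    done
  subgoal
    by (simp add: bowtie_def Dmap_def zeros)
  done

lemma fi_21122: "bt (0, u0) (x0, 0) (bt (x1, 0) (0, u1) (0, u2)) = bt (bt (0, u0) (x0, 0) (x1, 0)) (0, u1) (0, u2) + bt (x1, 0) (bt (0, u0) (x0, 0) (0, u1)) (0, u2) + bt (x1, 0) (0, u1) (bt (0, u0) (x0, 0) (0, u2))"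
  apply (rule prod_eqI)
  subgoal
    by (simp add: bowtie_def Dmap_def zeros)
  subgoal
    apply (rule close[where S="(0) - ((b2 (r1 x0 x1 u0) u1 u2 - (r1 x0 (r2 u1 u2 x1) u0 + Dmap r1 x1 (r2 u0 u1 x0) u2 - r1 x1 (r2 u0 u2 x0) u1)))"])
     apply (simp only: axs free zeros, simp)
    apply (simp add: bowtie_def Dmap_def lin algebra_simps)
    done
  done

lemma fi_21211: "bt (0, u0) (x0, 0) (bt (0, u1) (x1, 0) (x2, 0)) = bt (bt (0, u0) (x0, 0) (0, u1)) (x1, 0) (x2, 0) + bt (0, u1) (bt (0, u0) (x0, 0) (x1, 0)) (x2, 0) + bt (0, u1) (x1, 0) (bt (0, u0) (x0, 0) (x2, 0))"
  apply (rule prod_eqI)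
  subgoal
    apply (rule close[where S="(b1 (r2 u0 u1 x0) x1 x2 - (r2 u0 (r1 x1 x2 u1) x0 + Dmap r2 u1 (r1 x0 x1 u0) x2 - r2 u1 (r1 x0 x2 u0) x1))"])
     apply (simp only: axs free zeros, simp)
    apply (simp add: bowtie_def Dmap_def lin algebra_simps)
    done
  subgoal
    by (simp add: bowtie_def Dmap_def zeros)
  done

lemma fi_21212: "bt (0, u0) (x0, 0) (bt (0, u1) (x1, 0) (0, u2)) = bt (bt (0, u0) (x0, 0) (0, u1)) (x1, 0) (0, u2) + bt (0, u1) (bt (0, u0) (x0, 0) (x1, 0)) (0, u2) + bt (0, u1) (x1, 0) (bt (0, u0) (x0, 0) (0, u2))"
  apply (rule prod_eqI)
  subgoal
    by (simp add: bowtie_def Dmap_def zeros)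
  subgoal
    apply (rule close[where S="((b2 u2 u1 (r1 x0 x1 u0) - (r1 x0 (Dmap r2 u2 u1 x1) u0 + r1 (r2 u0 u1 x0) x1 u2 - r1 (r2 u0 u2 x0) x1 u1)) + (b2 (r1 x0 x1 u0) u2 u1 - (r1 x0 (r2 u2 u1 x1) u0 + Dmap r1 x1 (r2 u0 u2 x0) u1 - r1 x1 (r2 u0 u1 x0) u2))) - (((b2 (r1 x0 x1 u0) u2 u1 + b2 u2 u1 (r1 x0 x1 u0) + b2 u1 (r1 x0 x1 u0) u2)))"])
     apply (simp only: axs free zeros, simp)
    apply (simp add: bowtie_def Dmap_def lin algebra_simps)
    done
  done

lemma fi_21221: "bt (0, u0) (x0, 0) (bt (0, u1) (0, u2) (x1, 0)) = bt (bt (0, u0) (x0, 0) (0, u1)) (0, u2) (x1, 0) + bt (0, u1) (bt (0, u0) (x0, 0) (0, u2)) (x1, 0) + bt (0, u1) (0, u2) (bt (0, u0) (x0, 0) (x1, 0))"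
  apply (rule prod_eqI)
  subgoal
    by (simp add: bowtie_def Dmap_def zeros)
  subgoal
    apply (rule close[where S="(0) - ((b2 u1 u2 (r1 x0 x1 u0) - (r1 x0 (Dmap r2 u1 u2 x1) u0 + r1 (r2 u0 u2 x0) x1 u1 - r1 (r2 u0 u1 x0) x1 u2)))"])
     apply (simp only: axs free zeros, simp)
    apply (simp add: bowtie_def Dmap_def lin algebra_simps)
    done
  done

lemma fi_21222: "bt (0, u0) (x0, 0) (bt (0, u1) (0, u2) (0, u3)) = bt (bt (0, u0) (x0, 0) (0, u1)) (0, u2) (0, u3) + bt (0, u1) (bt (0, u0) (x0, 0) (0, u2)) (0, u3) + bt (0, u1) (0, u2) (bt (0, u0) (x0, 0) (0, u3))"
  apply (rule prod_eqI)
  subgoal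
    apply (rule close[where S="(r2 u2 u3 (r2 u0 u1 x0) - r2 u1 u3 (r2 u0 u2 x0) - r2 u0 (b2 u1 u2 u3) x0 + Dmap r2 u1 u2 (r2 u0 u3 x0))"])
     apply (simp only: axs free zeros, simp)
    apply (simp add: bowtie_def Dmap_def lin algebra_simps)
    done
  subgoal
    by (simp add: bowtie_def Dmap_def zeros)
  done

lemma fi_22111: "bt (0, u0) (0, u1) (bt (x0, 0) (x1, 0) (x2, 0)) = bt (bt (0, u0) (0, u1) (x0, 0)) (x1, 0) (x2, 0) + bt (x0, 0) (bt (0, u0) (0, u1) (x1, 0)) (x2, 0) + bt (x0, 0) (x1, 0) (bt (0, u0) (0, u1) (x2, 0))"
  apply (rule prod_eqI)
  subgoal
    apply (rule close[where S="((r2 u1 u0 (b1 x0 x1 x2) - (b1 x0 x1 (r2 u1 u0 x2) - r2 (Dmap r1 x0 x1 u1) u0 x2 - r2 u1 (Dmap r1 x0 x1 u0) x2)) + (b1 (r2 u0 u1 x0) x1 x2 - (r2 u0 (r1 x1 x2 u1) x0 + Dmap r2 u1 (r1 x0 x1 u0) x2 - r2 u1 (r1 x0 x2 u0) x1)) + (b1 (r2 u1 u0 x1) x0 x2 - (r2 u1 (r1 x0 x2 u0) x1 + Dmap r2 u0 (r1 x1 x0 u1) x2 - r2 u0 (r1 x1 x2 u1) x0)) + ((b1 (r2 u0 u1 x1) x0 x2 + b1 x0 (r2 u0 u1 x1) x2))) - ((r2 u0 u1 (b1 x0 x1 x2) - (b1 x0 x1 (r2 u0 u1 x2) - r2 (Dmap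 r1 x0 x1 u0) u1 x2 - r2 u0 (Dmap r1 x0 x1 u1) x2)) + (b1 (r2 u1 u0 x0) x1 x2 - (r2 u1 (r1 x1 x2 u0) x0 + Dmap r2 u0 (r1 x0 x1 u1) x2 - r2 u0 (r1 x0 x2 u1) x1)) + (b1 (r2 u0 u1 x1) x0 x2 - (r2 u0 (r1 x0 x2 u1) x1 + Dmap r2 u1 (r1 x1 x0 u0) x2 - r2 u1 (r1 x1 x2 u0) x0)) + ((b1 (r2 u1 u0 x1) x0 x2 + b1 x0 (r2 u1 u0 x1) x2)))"])
     apply (simp only: axs free zeros, simp)
    apply (simp add: bowtie_def Dmap_def lin algebra_simps)
    done
  subgoal
    by (simp add: bowtie_def Dmap_def zeros)
  done

lemma fi_22112: "bt (0, u0) (0, u1) (bt (x0, 0) (x1, 0) (0, u2)) = bt (bt (0, u0) (0, u1) (x0, 0)) (x1, 0) (0, u2) + bt (x0, 0) (bt (0, u0) (0, u1) (x1, 0)) (0, u2) + bt (x0, 0) (x1, 0) (bt (0, u0) (0, u1) (0, u2))"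
  apply (rule prod_eqI)
  subgoal
    by (simp add: bowtie_def Dmap_def zeros)
  subgoal
    apply (rule close[where S="((r1 x0 x1 (b2 u0 u1 u2) - (b2 u0 u1 (r1 x0 x1 u2) - r1 (Dmap r2 u0 u1 x0) x1 u2 - r1 x0 (Dmap r2 u0 u1 x1) u2))) - ((r1 x1 x0 (b2 u0 u1 u2) - (b2 u0 u1 (r1 x1 x0 u2) - r1 (Dmap r2 u0 u1 x1) x0 u2 - r1 x1 (Dmap r2 u0 u1 x0) u2)))"])
     apply (simp only: axs free zeros, simp)
    apply (simp add: bowtie_def Dmap_def lin algebra_simps)
    done
  done

lemma fi_22121: "bt (0, u0) (0, u1) (bt (x0, 0) (0, u2) (x1, 0)) = bt (bt (0, u0) (0, u1) (x0, 0)) (0, u2) (x1, 0) + bt (x0, 0) (bt (0, u0) (0, u1) (0, u2)) (x1, 0) + bt (x0, 0) (0, u2) (bt (0, u0) (0, u1) (x1, 0))"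
  apply (rule prod_eqI)
  subgoal
    by (simp add: bowtie_def Dmap_def zeros)
  subgoal
    apply (rule close[where S="(r1 x0 x1 (b2 u0 u1 u2) - (b2 u0 u1 (r1 x0 x1 u2) - r1 (Dmap r2 u0 u1 x0) x1 u2 - r1 x0 (Dmap r2 u0 u1 x1) u2))"])
     apply (simp only: axs free zeros, simp)
    apply (simp add: bowtie_def Dmap_def lin algebra_simps)
    done
  done

lemma fi_22122: "bt (0, u0) (0, u1) (bt (x0, 0) (0, u2) (0, u3)) = bt (bt (0, u0) (0, u1) (x0, 0)) (0, u2) (0, u3) + bt (x0, 0) (bt (0, u0) (0, u1) (0, u2)) (0, u3) + bt (x0, 0) (0, u2) (bt (0, u0) (0, u1) (0, u3))"
  apply (rule prod_eqI)
  subgoal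
    apply (rule close[where S="(0) - ((r2 (b2 u0 u1 u2) u3 x0 + r2 u2 (b2 u0 u1 u3) x0 - (Dmap r2 u0 u1 (r2 u2 u3 x0) - r2 u2 u3 (Dmap r2 u0 u1 x0))))"])
     apply (simp only: axs free zeros, simp)
    apply (simp add: bowtie_def Dmap_def lin algebra_simps)
    done
  subgoal
    by (simp add: bowtie_def Dmap_def zeros)
  done

lemma fi_22211: "bt (0, u0) (0, u1) (bt (0, u2) (x0, 0) (x1, 0)) = bt (bt (0, u0) (0, u1) (0, u2)) (x0, 0) (x1, 0) + bt (0, u2) (bt (0, u0) (0, u1) (x0, 0)) (x1, 0) + bt (0, u2) (x0, 0) (bt (0, u0) (0, u1) (x1, 0))"
  apply (rule prod_eqI)
  subgoal
    by (simp add: bowtie_def Dmap_def zeros)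
  subgoal
    apply (rule close[where S="(0) - ((r1 x0 x1 (b2 u0 u1 u2) - (b2 u0 u1 (r1 x0 x1 u2) - r1 (Dmap r2 u0 u1 x0) x1 u2 - r1 x0 (Dmap r2 u0 u1 x1) u2)))"])
     apply (simp only: axs free zeros, simp)
    apply (simp add: bowtie_def Dmap_def lin algebra_simps)
    done
  done

lemma fi_22212: "bt (0, u0) (0, u1) (bt (0, u2) (x0, 0) (0, u3)) = bt (bt (0, u0) (0, u1) (0, u2)) (x0, 0) (0, u3) + bt (0, u2) (bt (0, u0) (0, u1) (x0, 0)) (0, u3) + bt (0, u2) (x0, 0) (bt (0, u0) (0, u1) (0, u3))"
  apply (rule prod_eqI)
  subgoal
    apply (rule close[where S="(r2 (b2 u0 u1 u2) u3 x0 + r2 u2 (b2 u0 u1 u3) x0 - (Dmap r2 u0 u1 (r2 u2 u3 x0) - r2 u2 u3 (Dmap r2 u0 u1 x0)))"])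
     apply (simp only: axs free zeros, simp)
    apply (simp add: bowtie_def Dmap_def lin algebra_simps)
    done
  subgoal
    by (simp add: bowtie_def Dmap_def zeros)
  done

lemma fi_22221: "bt (0, u0) (0, u1) (bt (0, u2) (0, u3) (x0, 0)) = bt (bt (0, u0) (0, u1) (0, u2)) (0, u3) (x0, 0) + bt (0, u2) (bt (0, u0) (0, u1) (0, u3)) (x0, 0) + bt (0, u2) (0, u3) (bt (0, u0) (0, u1) (x0, 0))"
  apply (rule prod_eqI)
  subgoal
    apply (rule close[where S="((r2 (b2 u0 u1 u2) u3 x0 + r2 u2 (b2 u0 u1 u3) x0 - (Dmap r2 u0 u1 (r2 u2 u3 x0) - r2 u2 u3 (Dmap r2 u0 u1 x0)))) - ((r2 (b2 u0 u1 u3) u2 x0 + r2 u3 (b2 u0 u1 u2) x0 - (Dmap r2 u0 u1 (r2 u3 u2 x0) - r2 u3 u2 (Dmap r2 u0 u1 x0))))"])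
     apply (simp only: axs free zeros, simp)
    apply (simp add: bowtie_def Dmap_def lin algebra_simps)
    done
  subgoal
    by (simp add: bowtie_def Dmap_def zeros)
  done

lemma fi_22222: "bt (0, u0) (0, u1) (bt (0, u2) (0, u3) (0, u4)) = bt (bt (0, u0) (0, u1) (0, u2)) (0, u3) (0, u4) + bt (0, u2) (bt (0, u0) (0, u1) (0, u3)) (0, u4) + bt (0, u2) (0, u3) (bt (0, u0) (0, u1) (0, u4))"
  apply (rule prod_eqI)
  subgoal
    by (simp add: bowtie_def Dmap_def zeros)
  subgoal
    apply (rule close[where S="(b2 u0 u1 (b2 u2 u3 u4) - (b2 (b2 u0 u1 u2) u3 u4 + b2 u2 (b2 u0 u1 u3) u4 + b2 u2 u3 (b2 u0 u1 u4)))"])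
     apply (simp only: axs free zeros, simp)
    apply (simp add: bowtie_def Dmap_def lin algebra_simps)
    done
  done

end

locale mpl_fi = mpl_lts +
  assumes fi1: "\<And>p q r s t. fst (bt p q (bt r s t)) - fst (bt (bt p q r) s t + bt r (bt p q s) t + bt r s (bt p q t)) = 0"
  and fi2: "\<And>p q r s t. snd (bt p q (bt r s t)) - snd (bt (bt p q r) s t + bt r (bt p q s) t + bt r s (bt p q t)) = 0"
begin

lemma bw_ltsb1: "b1 x0 x1 (b1 x2 x3 x4) = b1 (b1 x0 x1 x2) x3 x4 + b1 x2 (b1 x0 x1 x3) x4 + b1 x2 x3 (b1 x0 x1 x4)"
  apply (rule close[where S="(fst (bt (x0, 0) (x1, 0) (bt (x2, 0) (x3, 0) (x4, 0))) - fst (bt (bt (x0, 0) (x1, 0) (x2, 0)) (x3, 0) (x4, 0) + bt (x2, 0) (bt (x0, 0) (x1, 0) (x3, 0)) (x4, 0) + bt (x2, 0) (x3, 0) (bt (x0, 0) (x1, 0) (x4, 0))))"])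
   apply (simp only: fi1 fi2 free zeros, simp)
  apply (simp add: bowtie_def Dmap_def lin algebra_simps)
  done

lemma bw_ltsb2: "b2 u0 u1 (b2 u2 u3 u4) = b2 (b2 u0 u1 u2) u3 u4 + b2 u2 (b2 u0 u1 u3) u4 + b2 u2 u3 (b2 u0 u1 u4)"
  apply (rule close[where S="(snd (bt (0, u0) (0, u1) (bt (0, u2) (0, u3) (0, u4))) - snd (bt (bt (0, u0) (0, u1) (0, u2)) (0, u3) (0, u4) + bt (0, u2) (bt (0, u0) (0, u1) (0, u3)) (0, u4) + bt (0, u2) (0, u3) (bt (0, u0) (0, u1) (0, u4))))"])
   apply (simp only: fi1 fi2 free zeros, simp)
  apply (simp add: bowtie_def Dmap_def lin algebra_simps)
  done

lemma bw_rep1a: "r1 x2 x3 (r1 x0 x1 u0) - r1 x1 x3 (r1 x0 x2 u0) - r1 x0 (b1 x1 x2 x3) u0 + Dmap r1 x1 x2 (r1 x0 x3 u0) = 0"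
  apply (rule close[where S="(snd (bt (x0, 0) (0, u0) (bt (x1, 0) (x2, 0) (x3, 0))) - snd (bt (bt (x0, 0) (0, u0) (x1, 0)) (x2, 0) (x3, 0) + bt (x1, 0) (bt (x0, 0) (0, u0) (x2, 0)) (x3, 0) + bt (x1, 0) (x2, 0) (bt (x0, 0) (0, u0) (x3, 0))))"])
   apply (simp only: fi1 fi2 free zeros, simp)
  apply (simp add: bowtie_def Dmap_def lin algebra_simps)
  done

lemma bw_rep1b: "r1 (b1 x0 x1 x2) x3 u0 + r1 x2 (b1 x0 x1 x3) u0 = Dmap r1 x0 x1 (r1 x2 x3 u0) - r1 x2 x3 (Dmap r1 x0 x1 u0)"
  apply (rule close[where S="(snd (bt (x0, 0) (x1, 0) (bt (x2, 0) (0, u0) (x3, 0))) - snd (bt (bt (x0, 0) (x1, 0) (x2, 0)) (0, u0) (x3, 0) + bt (x2, 0) (bt (x0, 0) (x1, 0) (0, u0)) (x3, 0) + bt (x2, 0) (0, u0) (bt (x0, 0) (x1, 0) (x3, 0))))"])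
   apply (simp only: fi1 fi2 free zeros, simp)
  apply (simp add: bowtie_def Dmap_def lin algebra_simps)
  done

lemma bw_rep2a: "r2 u2 u3 (r2 u0 u1 x0) - r2 u1 u3 (r2 u0 u2 x0) - r2 u0 (b2 u1 u2 u3) x0 + Dmap r2 u1 u2 (r2 u0 u3 x0) = 0"
  apply (rule close[where S="(0) - ((fst (bt (x0, 0) (0, u0) (bt (0, u1) (0, u2) (0, u3))) - fst (bt (bt (x0, 0) (0, u0) (0, u1)) (0, u2) (0, u3) + bt (0, u1) (bt (x0, 0) (0, u0) (0, u2)) (0, u3) + bt (0, u1) (0, u2) (bt (x0, 0) (0, u0) (0, u3)))))"])
   apply (simp only: fi1 fi2 free zeros, simp)
  apply (simp add: bowtie_def Dmap_def lin algebra_simps)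
  done

lemma bw_rep2b: "r2 (b2 u0 u1 u2) u3 x0 + r2 u2 (b2 u0 u1 u3) x0 = Dmap r2 u0 u1 (r2 u2 u3 x0) - r2 u2 u3 (Dmap r2 u0 u1 x0)"
  apply (rule close[where S="(0) - ((fst (bt (0, u0) (0, u1) (bt (x0, 0) (0, u2) (0, u3))) - fst (bt (bt (0, u0) (0, u1) (x0, 0)) (0, u2) (0, u3) + bt (x0, 0) (bt (0, u0) (0, u1) (0, u2)) (0, u3) + bt (x0, 0) (0, u2) (bt (0, u0) (0, u1) (0, u3)))))"])
   apply (simp only: fi1 fi2 free zeros, simp)
  apply (simp add: bowtie_def Dmap_def lin algebra_simps)
  done

lemma bw_mp1: "r2 u0 u1 (b1 x0 x1 x2) = b1 x0 x1 (r2 u0 u1 x2) - r2 (Dmap r1 x0 x1 u0) u1 x2 - r2 u0 (Dmap r1 x0 x1 u1) x2"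
  apply (rule close[where S="(0) - ((fst (bt (x0, 0) (x1, 0) (bt (x2, 0) (0, u0) (0, u1))) - fst (bt (bt (x0, 0) (x1, 0) (x2, 0)) (0, u0) (0, u1) + bt (x2, 0) (bt (x0, 0) (x1, 0) (0, u0)) (0, u1) + bt (x2, 0) (0, u0) (bt (x0, 0) (x1, 0) (0, u1)))))"])
   apply (simp only: fi1 fi2 free zeros, simp)
  apply (simp add: bowtie_def Dmap_def lin algebra_simps)
  done

lemma bw_mp2: "b1 x0 x1 (r2 u0 u1 x2) = r2 u0 (Dmap r1 x0 x1 u1) x2 + r2 (r1 x2 x1 u0) u1 x0 - r2 (r1 x2 x0 u0) u1 x1"
  apply (rule close[where S="(0) - ((fst (bt (x2, 0) (0, u0) (bt (x0, 0) (x1, 0) (0, u1))) - fst (bt (bt (x2, 0) (0, u0) (x0, 0)) (x1, 0) (0, u1) + bt (x0, 0) (bt (x2, 0) (0, u0) (x1, 0)) (0, u1) + bt (x0, 0) (x1, 0) (bt (x2, 0) (0, u0) (0, u1)))))"])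
   apply (simp only: fi1 fi2 free zeros, simp)
  apply (simp add: bowtie_def Dmap_def lin algebra_simps)
  done

lemma bw_mp3: "b1 (r2 u0 u1 x0) x1 x2 = r2 u0 (r1 x1 x2 u1) x0 + Dmap r2 u1 (r1 x0 x1 u0) x2 - r2 u1 (r1 x0 x2 u0) x1"
  apply (rule close[where S="(0) - ((fst (bt (x0, 0) (0, u0) (bt (0, u1) (x1, 0) (x2, 0))) - fst (bt (bt (x0, 0) (0, u0) (0, u1)) (x1, 0) (x2, 0) + bt (0, u1) (bt (x0, 0) (0, u0) (x1, 0)) (x2, 0) + bt (0, u1) (x1, 0) (bt (x0, 0) (0, u0) (x2, 0)))))"])
   apply (simp only: fi1 fi2 free zeros, simp)
  apply (simp add: bowtie_def Dmap_def lin algebra_simps)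
  done

lemma bw_mp4: "r1 x0 x1 (b2 u0 u1 u2) = b2 u0 u1 (r1 x0 x1 u2) - r1 (Dmap r2 u0 u1 x0) x1 u2 - r1 x0 (Dmap r2 u0 u1 x1) u2"
  apply (rule close[where S="(snd (bt (0, u0) (0, u1) (bt (x0, 0) (0, u2) (x1, 0))) - snd (bt (bt (0, u0) (0, u1) (x0, 0)) (0, u2) (x1, 0) + bt (x0, 0) (bt (0, u0) (0, u1) (0, u2)) (x1, 0) + bt (x0, 0) (0, u2) (bt (0, u0) (0, u1) (x1, 0))))"])
   apply (simp only: fi1 fi2 free zeros, simp)
  apply (simp add: bowtie_def Dmap_def lin algebra_simps)
  done

lemma bw_mp5: "b2 u0 u1 (r1 x0 x1 u2) = r1 x0 (Dmap r2 u0 u1 x1) u2 + r1 (r2 u2 u1 x0) x1 u0 - r1 (r2 u2 u0 x0) x1 u1"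
  apply (rule close[where S="(snd (bt (x0, 0) (0, u2) (bt (0, u0) (0, u1) (x1, 0))) - snd (bt (bt (x0, 0) (0, u2) (0, u0)) (0, u1) (x1, 0) + bt (0, u0) (bt (x0, 0) (0, u2) (0, u1)) (x1, 0) + bt (0, u0) (0, u1) (bt (x0, 0) (0, u2) (x1, 0))))"])
   apply (simp only: fi1 fi2 free zeros, simp)
  apply (simp add: bowtie_def Dmap_def lin algebra_simps)
  done

lemma bw_mp6: "b2 (r1 x0 x1 u0) u1 u2 = r1 x0 (r2 u1 u2 x1) u0 + Dmap r1 x1 (r2 u0 u1 x0) u2 - r1 x1 (r2 u0 u2 x0) u1"
  apply (rule close[where S="(snd (bt (x0, 0) (0, u0) (bt (x1, 0) (0, u1) (0, u2))) - snd (bt (bt (x0, 0) (0, u0) (x1, 0)) (0, u1) (0, u2) + bt (x1, 0) (bt (x0, 0) (0, u0) (0, u1)) (0, u2) + bt (x1, 0) (0, u1) (bt (x0, 0) (0, u0) (0, u2))))"])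
   apply (simp only: fi1 fi2 free zeros, simp)
  apply (simp add: bowtie_def Dmap_def lin algebra_simps)
  done

end

lemma diff0: "a = b \<Longrightarrow> a - b = (0::'a::ab_group_add)" by simp

lemma red1:
  fixes G :: "'a::ab_group_add \<times> 'b::ab_group_add \<Rightarrow> 'c::ab_group_add"
  assumes "\<And>p. snd p = 0 \<or> fst p = 0 \<Longrightarrow> G p = 0" and "\<And>p q. G (p + q) = G p + G q"
  shows "G p = 0"
proof -
  have "p = (fst p, 0) + (0, snd p)" by simp
  then have "G p = G (fst p, 0) + G (0, snd p)" using assms(2) by metis
  also have "\<dots> = 0" using assms(1)[of "(fst p, 0)"] assms(1)[of "(0, snd p)"] by simp
  finally show ?thesis .
qed

lemma puE: "snd p = 0 \<or> fst p = 0 \<Longrightarrow> (\<And>x. p = (x, 0) \<Longrightarrow> P) \<Longrightarrow> (\<And>u. p = (0, u) \<Longrightarrow> P) \<Longrightarrow> P"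
  by (cases p) auto

lemma red5:
  fixes F :: "'a::ab_group_add \<times> 'b::ab_group_add \<Rightarrow> 'a \<times> 'b \<Rightarrow> 'a \<times> 'b \<Rightarrow> 'a \<times> 'b \<Rightarrow> 'a \<times> 'b \<Rightarrow> 'c::ab_group_add"
  assumes a1: "\<And>p p' q r s t. F (p + p') q r s t = F p q r s t + F p' q r s t"
    and a2: "\<And>p q q' r s t. F p (q + q') r s t = F p q r s t + F p q' r s t"
    and a3: "\<And>p q r r' s t. F p q (r + r') s t = F p q r s t + F p q r' s t"
    and a4: "\<And>p q r s s' t. F p q r (s + s') t = F p q r s t + F p q r s' t"
    and a5: "\<And>p q r s t t'. F p q r s (t + t') = F p q r s t + F p q r s t'"
    and pu: "\<And>p q r s t. snd p = 0 \<or> fst p = 0 \<Longrightarrow> snd q = 0 \<or> fst q = 0 \<Longrightarrow> snd r = 0 \<or> fst r = 0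
      \<Longrightarrow> snd s = 0 \<or> fst s = 0 \<Longrightarrow> snd t = 0 \<or> fst t = 0 \<Longrightarrow> F p q r s t = 0"
  shows "F p q r s t = 0"
proof -
  have h4: "F p q r s t = 0" if "snd p = 0 \<or> fst p = 0" "snd q = 0 \<or> fst q = 0" "snd r = 0 \<or> fst r = 0"
      "snd s = 0 \<or> fst s = 0" for p q r s t
    by (rule red1[where G="\<lambda>t. F p q r s t"]) (simp_all add: pu that a5)
  have h3: "F p q r s t = 0" if "snd p = 0 \<or> fst p = 0" "snd q = 0 \<or> fst q = 0" "snd r = 0 \<or> fst r = 0" for p q r s t
    by (rule red1[where G="\<lambda>s. F p q r s t"]) (simp_all add: h4 that a4)
  have h2: "F p q r s t = 0" if "snd p = 0 \<or> fst p = 0" "snd q = 0 \<or> fst q = 0" for p q r s t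
    by (rule red1[where G="\<lambda>r. F p q r s t"]) (simp_all add: h3 that a3)
  have h1: "F p q r s t = 0" if "snd p = 0 \<or> fst p = 0" for p q r s t
    by (rule red1[where G="\<lambda>q. F p q r s t"]) (simp_all add: h2 that a2)
  show ?thesis
    by (rule red1[where G="\<lambda>p. F p q r s t"]) (simp_all add: h1 a1)
qed

lemma red3:
  fixes F :: "'a::ab_group_add \<times> 'b::ab_group_add \<Rightarrow> 'a \<times> 'b \<Rightarrow> 'a \<times> 'b \<Rightarrow> 'c::ab_group_add"
  assumes a1: "\<And>p p' q r. F (p + p') q r = F p q r + F p' q r"
    and a2: "\<And>p q q' r. F p (q + q') r = F p q r + F p q' r"
    and a3: "\<And>p q r r'. F p q (r + r') = F p q r + F p q r'"
    and pu: "\<And>p q r. snd p = 0 \<or> fst p = 0 \<Longrightarrow> snd q = 0 \<or> fst q = 0 \<Longrightarrow> snd r = 0 \<or> fst r = 0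
       \<Longrightarrow> F p q r = 0"
  shows "F p q r = 0"
proof -
  have h2: "F p q r = 0" if "snd p = 0 \<or> fst p = 0" "snd q = 0 \<or> fst q = 0" for p q r
    by (rule red1[where G="\<lambda>r. F p q r"]) (simp_all add: pu that a3)
  have h1: "F p q r = 0" if "snd p = 0 \<or> fst p = 0" for p q r
    by (rule red1[where G="\<lambda>q. F p q r"]) (simp_all add: h2 that a2)
  show ?thesis
    by (rule red1[where G="\<lambda>p. F p q r"]) (simp_all add: h1 a1)
qed

context mpl begin
lemma bt_add1: "bt (p + p') q r = bt p q r + bt p' q r"
  by (cases p; cases p'; cases q; cases r) (simp add: bowtie_def Dmap_def lin algebra_simps)
lemma bt_add2: "bt p (q + q') r = bt p q r + bt p q' r"
  by (cases p; cases q'; cases q; cases r) (simp add: bowtie_def Dmap_def lin algebra_simps)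
lemma bt_add3: "bt p q (r + r') = bt p q r + bt p q r'"
  by (cases p; cases r'; cases q; cases r) (simp add: bowtie_def Dmap_def lin algebra_simps)
end

context mpl_lts begin
lemma bt_xx: "bt p p q = 0"
  by (cases p; cases q) (simp add: bowtie_def Dmap_def b1xx b2xx zero_prod_def)
lemma bt_jac: "bt p q r + bt q r p + bt r p q = 0"
proof -
  obtain x u where p: "p = (x, u)" by (cases p)
  obtain y v where q: "q = (y, v)" by (cases q)
  obtain z w where r: "r = (z, w)" by (cases r)
  show ?thesis unfolding p q r
    apply (rule prod_eqI)
     apply (rule close[where S="b1 x y z + b1 y z x + b1 z x y"])
      apply (rule b1jac)
     apply (simp add: bowtie_def Dmap_def algebra_simps)
    apply (rule close[where S="b2 u v w + b2 v w u + b2 w u v"])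
     apply (rule b2jac)
    apply (simp add: bowtie_def Dmap_def algebra_simps)
    done
qed
end

context mpl_mp begin
lemmas fi_all = fi_11111 fi_11112 fi_11121 fi_11122 fi_11211 fi_11212 fi_11221 fi_11222 fi_12111 fi_12112 fi_12121 fi_12122 fi_12211 fi_12212 fi_12221 fi_12222 fi_21111 fi_21112 fi_21121 fi_21122 fi_21211 fi_21212 fi_21221 fi_21222 fi_22111 fi_22112 fi_22121 fi_22122 fi_22211 fi_22212 fi_22221 fi_22222

lemma bt_fi: "bt p q (bt r s t) = bt (bt p q r) s t + bt r (bt p q s) t + bt r s (bt p q t)"
proof -
  define F where "F p q r s t = bt p q (bt r s t) - (bt (bt p q r) s t + bt r (bt p q s) t + bt r s (bt p q t))" for p q r s t
  have "F p q r s t = 0"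
  proof (rule red5[where F=F])
    show "F (p + p') q r s t = F p q r s t + F p' q r s t" for p p' q r s t
      unfolding F_def by (simp add: bt_add1 bt_add2 bt_add3 algebra_simps)
    show "F p (q + q') r s t = F p q r s t + F p q' r s t" for p q q' r s t
      unfolding F_def by (simp add: bt_add1 bt_add2 bt_add3 algebra_simps)
    show "F p q (r + r') s t = F p q r s t + F p q r' s t" for p q r r' s t
      unfolding F_def by (simp add: bt_add1 bt_add2 bt_add3 algebra_simps)
    show "F p q r (s + s') t = F p q r s t + F p q r s' t" for p q r s s' t
      unfolding F_def by (simp add: bt_add1 bt_add2 bt_add3 algebra_simps)
    show "F p q r s (t + t') = F p q r s t + F p q r s t'" for p q r s t t'
      unfolding F_def by (simp add: bt_add1 bt_add2 bt_add3 algebra_simps)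
    show "F p q r s t = 0" if "snd p = 0 \<or> fst p = 0" "snd q = 0 \<or> fst q = 0" "snd r = 0 \<or> fst r = 0"
      "snd s = 0 \<or> fst s = 0" "snd t = 0 \<or> fst t = 0" for p q r s t
      using that
      apply (elim puE)
      apply (simp_all only: F_def)
      apply (rule diff0, rule fi_all)+
      done
  qed
  then show ?thesis unfolding F_def by simp
qed
end

lemma lin_add: "Vector_Spaces.linear s1 s2 f \<Longrightarrow> f (a + b) = f a + f b" by (simp add: linear_iff)
lemma lin_hom: "Vector_Spaces.linear s1 s2 f \<Longrightarrow> f (s1 c a) = s2 c (f a)" by (simp add: linear_iff)

lemma tri_unpack:
  assumes "trilinear s br"
  shows "br (a + a') y z = br a y z + br a' y z" "br x (a + a') z = br x a z + br x a' z"
    "br x y (a + a') = br x y a + br x y a'"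
    "br (s c x) y z = s c (br x y z)" "br x (s c y) z = s c (br x y z)" "br x y (s c z) = s c (br x y z)"
  using assms unfolding trilinear_def linear_iff by auto

lemma rep_unpack:
  assumes "is_rep s br sV \<rho>"
  shows "\<rho> (a + a') y v = \<rho> a y v + \<rho> a' y v" "\<rho> x (a + a') v = \<rho> x a v + \<rho> x a' v"
    "\<rho> x y (c + c') = \<rho> x y c + \<rho> x y c'"
    "\<rho> (s k x) y v = sV k (\<rho> x y v)" "\<rho> x (s k y) v = sV k (\<rho> x y v)" "\<rho> x y (sV k v) = sV k (\<rho> x y v)"
  using assms unfolding is_rep_def linear_iff by auto

lemma vs_prod:
  assumes "vector_space s1" "vector_space s2"
  shows "vector_space (prod_scale s1 s2)"
  using assms unfolding vector_space_def prod_scale_def by (auto simp: algebra_simps)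

locale mplh = mpl_mp b1 b2 r1 r2
  for b1 :: "'a::ab_group_add \<Rightarrow> 'a \<Rightarrow> 'a \<Rightarrow> 'a" and b2 :: "'b::ab_group_add \<Rightarrow> 'b \<Rightarrow> 'b \<Rightarrow> 'b"
    and r1 :: "'a \<Rightarrow> 'a \<Rightarrow> 'b \<Rightarrow> 'b" and r2 :: "'b \<Rightarrow> 'b \<Rightarrow> 'a \<Rightarrow> 'a" +
  fixes s1 :: "'k::field \<Rightarrow> 'a \<Rightarrow> 'a" and s2 :: "'k \<Rightarrow> 'b \<Rightarrow> 'b"
  assumes vs1: "vector_space s1" and vs2: "vector_space s2"
    and b1h1: "b1 (s1 c x) y z = s1 c (b1 x y z)" and b1h2: "b1 x (s1 c y) z = s1 c (b1 x y z)"
    and b1h3: "b1 x y (s1 c z) = s1 c (b1 x y z)"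
    and b2h1: "b2 (s2 c u) v w = s2 c (b2 u v w)" and b2h2: "b2 u (s2 c v) w = s2 c (b2 u v w)"
    and b2h3: "b2 u v (s2 c w) = s2 c (b2 u v w)"
    and r1h1: "r1 (s1 c x) y w = s2 c (r1 x y w)" and r1h2: "r1 x (s1 c y) w = s2 c (r1 x y w)"
    and r1h3: "r1 x y (s2 c w) = s2 c (r1 x y w)"
    and r2h1: "r2 (s2 c u) v z = s1 c (r2 u v z)" and r2h2: "r2 u (s2 c v) z = s1 c (r2 u v z)"
    and r2h3: "r2 u v (s1 c z) = s1 c (r2 u v z)"
begin

lemmas homs = b1h1 b1h2 b1h3 b2h1 b2h2 b2h3 r1h1 r1h2 r1h3 r2h1 r2h2 r2h3

lemma m1: "module s1" using vs1 by (simp add: module_iff_vector_space)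
lemma m2: "module s2" using vs2 by (simp add: module_iff_vector_space)

lemmas sdist = module.scale_right_distrib[OF m1] module.scale_right_diff_distrib[OF m1]
  module.scale_right_distrib[OF m2] module.scale_right_diff_distrib[OF m2]

lemma bt_hom1: "bt (prod_scale s1 s2 c p) q r = prod_scale s1 s2 c (bt p q r)"
  by (cases p; cases q; cases r) (simp add: bowtie_def Dmap_def prod_scale_def homs sdist)
lemma bt_hom2: "bt p (prod_scale s1 s2 c q) r = prod_scale s1 s2 c (bt p q r)"
  by (cases p; cases q; cases r) (simp add: bowtie_def Dmap_def prod_scale_def homs sdist)
lemma bt_hom3: "bt p q (prod_scale s1 s2 c r) = prod_scale s1 s2 c (bt p q r)"
  by (cases p; cases q; cases r) (simp add: bowtie_def Dmap_def prod_scale_def homs sdist)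

lemma bt_twilled: "is_strict_twilled s1 s2 bt"
proof -
  have vp: "vector_space (prod_scale s1 s2)" by (rule vs_prod[OF vs1 vs2])
  have "trilinear (prod_scale s1 s2) bt"
    unfolding trilinear_def linear_iff using vp by (simp add: bt_add1 bt_add2 bt_add3 bt_hom1 bt_hom2 bt_hom3)
  then have "is_LTS (prod_scale s1 s2) bt"
    unfolding is_LTS_def using bt_xx bt_jac bt_fi by blast
  then show ?thesis unfolding is_strict_twilled_def
    by (simp add: bowtie_def Dmap_def zeros)
qed

lemma restrict_bt: "restrict_data bt = (b1, b2, r1, r2)"
  by (simp add: restrict_data_def bowtie_def Dmap_def zeros fun_eq_iff)

end

lemma mp_unpack:
  assumes "is_matched_pair s1 s2 (b1, b2, r1, r2)" and "vector_space s1" "vector_space s2"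
  shows "mplh b1 b2 r1 r2 s1 s2"
proof -
  have L1: "is_LTS s1 b1" and L2: "is_LTS s2 b2" and R1: "is_rep s1 b1 s2 r1" and R2: "is_rep s2 b2 s1 r2"
    using assms(1) unfolding is_matched_pair_def by simp_all
  have T1: "trilinear s1 b1" and T2: "trilinear s2 b2" using L1 L2 unfolding is_LTS_def by simp_all
  note t1 = tri_unpack[OF T1] and t2 = tri_unpack[OF T2] and q1 = rep_unpack[OF R1] and q2 = rep_unpack[OF R2]
  interpret mpl b1 b2 r1 r2
    by unfold_locales (rule t1 t2 q1 q2)+
  interpret mpl_lts b1 b2 r1 r2
    by unfold_locales (use L1 L2 in \<open>simp_all add: is_LTS_def\<close>)
  note A = assms(1)[unfolded is_matched_pair_def prod.case]
  have M: "mpl_mp b1 b2 r1 r2"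
    apply unfold_locales
    apply (insert A[unfolded is_rep_def is_LTS_def])
    by ((rule diff0)?, elim conjE, (erule allE)+, assumption)+
  show ?thesis
    apply (rule mplh.intro[OF M])
    apply (rule mplh_axioms.intro)
    by (rule t1 t2 q1 q2 assms)+
qed

locale twl =
  fixes s1 :: "'k::field \<Rightarrow> 'a::ab_group_add \<Rightarrow> 'a" and s2 :: "'k \<Rightarrow> 'b::ab_group_add \<Rightarrow> 'b"
    and B :: "'a \<times> 'b \<Rightarrow> 'a \<times> 'b \<Rightarrow> 'a \<times> 'b \<Rightarrow> 'a \<times> 'b"
  assumes vs1: "vector_space s1" and vs2: "vector_space s2" and tw: "is_strict_twilled s1 s2 B"
begin

lemma BL: "is_LTS (prod_scale s1 s2) B" using tw unfolding is_strict_twilled_def by simp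
lemma BT: "trilinear (prod_scale s1 s2) B" using BL unfolding is_LTS_def by simp
lemmas Bt = tri_unpack[OF BT]
lemmas Badd1 = Bt(1) and Badd2 = Bt(2) and Badd3 = Bt(3) and Bhom1 = Bt(4) and Bhom2 = Bt(5) and Bhom3 = Bt(6)
lemma Bxx: "B p p q = 0" using BL unfolding is_LTS_def by blast
lemma Bjac: "B p q r + B q r p + B r p q = 0" using BL unfolding is_LTS_def by blast
lemma Bfi: "B p q (B r s t) = B (B p q r) s t + B r (B p q s) t + B r s (B p q t)"
  using BL unfolding is_LTS_def by blast
lemma Banti: "B p q r = - B q p r"
proof -
  have "B (p + q) (p + q) r = 0" by (rule Bxx)
  then have "B p q r + B q p r = 0" by (simp only: Badd1 Badd2) (simp add: Bxx add.commute)
  then show ?thesis by (simp add: eq_neg_iff_add_eq_0)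
qed
lemma Bswap: "B a b c = B c b a - B c a b"
proof -
  have "B a b c = - B b c a - B c a b" using Bjac[of a b c] by (simp add: eq_neg_iff_add_eq_0 algebra_simps)
  also have "- B b c a = B c b a" using Banti[of b c a] by simp
  finally show ?thesis by simp
qed

lemma st: "\<And>x y z. snd (B (x,0) (y,0) (z,0)) = 0" "\<And>u v w. fst (B (0,u) (0,v) (0,w)) = 0"
  "\<And>x y w. fst (B (x,0) (y,0) (0,w)) = 0" "\<And>u y z. fst (B (0,u) (y,0) (z,0)) = 0"
  "\<And>x v z. fst (B (x,0) (0,v) (z,0)) = 0" "\<And>u v z. snd (B (0,u) (0,v) (z,0)) = 0"
  "\<And>x v w. snd (B (x,0) (0,v) (0,w)) = 0" "\<And>u y w. snd (B (0,u) (y,0) (0,w)) = 0"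
  using tw unfolding is_strict_twilled_def by simp_all

definition "c1 x y z = fst (B (x,0) (y,0) (z,0))"
definition "c2 u v w = snd (B (0,u) (0,v) (0,w))"
definition "d1 x y u = snd (B (0,u) (x,0) (y,0))"
definition "d2 u v x = fst (B (x,0) (0,u) (0,v))"

lemma rd: "restrict_data B = (c1, c2, d1, d2)"
  unfolding restrict_data_def c1_def c2_def d1_def d2_def by (simp add: fun_eq_iff)

lemma P1: "(a + a', 0::'b) = (a, 0) + (a', 0)" by simp
lemma P2: "(0::'a, c + c') = (0, c) + (0, c')" by simp

lemma m1: "module s1" using vs1 by (simp add: module_iff_vector_space)
lemma m2: "module s2" using vs2 by (simp add: module_iff_vector_space)
lemma S1: "(s1 k x, 0::'b) = prod_scale s1 s2 k (x, 0)"
  by (simp add: prod_scale_def module.scale_zero_right[OF m2])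
lemma S2: "(0::'a, s2 k u) = prod_scale s1 s2 k (0, u)"
  by (simp add: prod_scale_def module.scale_zero_right[OF m1])
lemma fps: "fst (prod_scale s1 s2 k p) = s1 k (fst p)" "snd (prod_scale s1 s2 k p) = s2 k (snd p)"
  by (simp_all add: prod_scale_def)

lemma mplc: "mpl c1 c2 d1 d2"
  by unfold_locales
    (simp_all only: c1_def c2_def d1_def d2_def P1 P2 Badd1 Badd2 Badd3 fst_add snd_add)

lemma homc:
  "c1 (s1 k x) y z = s1 k (c1 x y z)" "c1 x (s1 k y) z = s1 k (c1 x y z)" "c1 x y (s1 k z) = s1 k (c1 x y z)"
  "c2 (s2 k u) v w = s2 k (c2 u v w)" "c2 u (s2 k v) w = s2 k (c2 u v w)" "c2 u v (s2 k w) = s2 k (c2 u v w)"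
  "d1 (s1 k x) y w = s2 k (d1 x y w)" "d1 x (s1 k y) w = s2 k (d1 x y w)" "d1 x y (s2 k w) = s2 k (d1 x y w)"
  "d2 (s2 k u) v z = s1 k (d2 u v z)" "d2 u (s2 k v) z = s1 k (d2 u v z)" "d2 u v (s1 k z) = s1 k (d2 u v z)"
  by (simp_all only: c1_def c2_def d1_def d2_def S1 S2 Bhom1 Bhom2 Bhom3 fps)

lemma mplc_lts: "mpl_lts c1 c2 d1 d2"
proof -
  interpret mpl c1 c2 d1 d2 by (rule mplc)
  show ?thesis
  proof unfold_locales
    show "c1 x x y = 0" for x y unfolding c1_def by (simp add: Bxx)
    show "c2 u u v = 0" for u v unfolding c2_def by (simp add: Bxx)
    show "c1 x y z + c1 y z x + c1 z x y = 0" for x y z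
      unfolding c1_def using Bjac[of "(x,0)" "(y,0)" "(z,0)"] by (metis fst_add fst_zero)
    show "c2 x y z + c2 y z x + c2 z x y = 0" for x y z
      unfolding c2_def using Bjac[of "(0,x)" "(0,y)" "(0,z)"] by (metis snd_add snd_zero)
  qed
qed

lemma Bpure:
  "B (x,0) (y,0) (z,0) = (c1 x y z, 0)"
  "B (0,u) (0,v) (0,w) = (0, c2 u v w)"
  "B (x,0) (y,0) (0,w) = (0, d1 y x w - d1 x y w)"
  "B (x,0) (0,v) (z,0) = (0, - d1 x z v)"
  "B (0,u) (y,0) (z,0) = (0, d1 y z u)"
  "B (0,u) (0,v) (z,0) = (d2 v u z - d2 u v z, 0)"
  "B (x,0) (0,v) (0,w) = (d2 v w x, 0)"
  "B (0,u) (y,0) (0,w) = (- d2 u w y, 0)"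
proof -
  show "B (x,0) (y,0) (z,0) = (c1 x y z, 0)" by (rule prod_eqI) (simp_all add: c1_def st)
  show "B (0,u) (0,v) (0,w) = (0, c2 u v w)" by (rule prod_eqI) (simp_all add: c2_def st)
  show "B (x,0) (y,0) (0,w) = (0, d1 y x w - d1 x y w)"
    by (rule prod_eqI) (simp_all add: Bswap[of "(x,0)"] d1_def st)
  show "B (x,0) (0,v) (z,0) = (0, - d1 x z v)"
    by (rule prod_eqI) (simp_all add: Banti[of "(x,0)"] d1_def st)
  show "B (0,u) (y,0) (z,0) = (0, d1 y z u)"
    by (rule prod_eqI) (simp_all add: d1_def st)
  show "B (0,u) (0,v) (z,0) = (d2 v u z - d2 u v z, 0)"
    by (rule prod_eqI) (simp_all add: Bswap[of "(0,u)"] d2_def st)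
  show "B (x,0) (0,v) (0,w) = (d2 v w x, 0)"
    by (rule prod_eqI) (simp_all add: d2_def st)
  show "B (0,u) (y,0) (0,w) = (- d2 u w y, 0)"
    by (rule prod_eqI) (simp_all add: Banti[of "(0,u)"] d2_def st)
qed

lemma bt_eq: "bowtie (c1, c2, d1, d2) = B"
proof -
  interpret mpl c1 c2 d1 d2 by (rule mplc)
  define F where "F p q r = B p q r - bt p q r" for p q r
  have "F p q r = 0" for p q r
  proof (rule red3[where F=F])
    show "F (p + p') q r = F p q r + F p' q r" for p p' q r
      unfolding F_def by (simp add: bt_add1 Badd1 algebra_simps)
    show "F p (q + q') r = F p q r + F p q' r" for p q q' r
      unfolding F_def by (simp add: bt_add2 Badd2 algebra_simps)
    show "F p q (r + r') = F p q r + F p q r'" for p q r r'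
      unfolding F_def by (simp add: bt_add3 Badd3 algebra_simps)
    show "F p q r = 0" if "snd p = 0 \<or> fst p = 0" "snd q = 0 \<or> fst q = 0" "snd r = 0 \<or> fst r = 0" for p q r
      using that
      apply (elim puE)
      apply (simp_all add: F_def Bpure bowtie_def Dmap_def zeros)
      done
  qed
  then show ?thesis unfolding F_def by (simp add: fun_eq_iff)
qed

lemma mplc_fi: "mpl_fi c1 c2 d1 d2"
proof -
  interpret mpl_lts c1 c2 d1 d2 by (rule mplc_lts)
  show ?thesis
    apply unfold_locales
     apply (simp only: bt_eq, rule diff0, rule arg_cong[of _ _ fst], rule Bfi)
    apply (simp only: bt_eq, rule diff0, rule arg_cong[of _ _ snd], rule Bfi)
    done
qed

lemma restrict_mp: "is_matched_pair s1 s2 (restrict_data B)"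
proof -
  interpret mpl_fi c1 c2 d1 d2 by (rule mplc_fi)
  note h = homc
  have T1: "trilinear s1 c1" unfolding trilinear_def linear_iff using vs1 by (simp add: lin h)
  have T2: "trilinear s2 c2" unfolding trilinear_def linear_iff using vs2 by (simp add: lin h)
  have L1: "is_LTS s1 c1" unfolding is_LTS_def using T1 b1xx b1jac bw_ltsb1 by blast
  have L2: "is_LTS s2 c2" unfolding is_LTS_def using T2 b2xx b2jac bw_ltsb2 by blast
  have R1: "is_rep s1 c1 s2 d1"
    unfolding is_rep_def using bw_rep1a bw_rep1b by (simp add: linear_iff vs1 vs2 lin h)
  have R2: "is_rep s2 c2 s1 d2"
    unfolding is_rep_def using bw_rep2a bw_rep2b by (simp add: linear_iff vs1 vs2 lin h)
  show ?thesis unfolding rd is_matched_pair_def prod.case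
    by (intro conjI allI; rule L1 L2 R1 R2 bw_mp1 bw_mp2 bw_mp3 bw_mp4 bw_mp5 bw_mp6)
qed

lemma bt_restrict: "bowtie (restrict_data B) = B" using bt_eq rd by simp

end

theorem theorem5p4:
  fixes s1 :: "'k::field_char_0 \<Rightarrow> 'a::ab_group_add \<Rightarrow> 'a"
    and s2 :: "'k \<Rightarrow> 'b::ab_group_add \<Rightarrow> 'b"
  assumes "vector_space s1" and "vector_space s2"
  shows "bij_betw bowtie {m. is_matched_pair s1 s2 m} {B. is_strict_twilled s1 s2 B}
    \<and> (\<forall>m. is_matched_pair s1 s2 m \<longrightarrow> restrict_data (bowtie m) = m)
    \<and> (\<forall>B. is_strict_twilled s1 s2 B \<longrightarrow> is_matched_pair s1 s2 (restrict_data B)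
                                       \<and> bowtie (restrict_data B) = B)"
proof -
  have left: "restrict_data (bowtie m) = m \<and> is_strict_twilled s1 s2 (bowtie m)"
    if "is_matched_pair s1 s2 m" for m
  proof -
    obtain b1 b2 r1 r2 where m: "m = (b1, b2, r1, r2)" by (cases m) auto
    interpret mplh b1 b2 r1 r2 s1 s2
      by (rule mp_unpack) (use that m assms in simp_all)
    show ?thesis unfolding m using restrict_bt bt_twilled by simp
  qed
  have right: "is_matched_pair s1 s2 (restrict_data B) \<and> bowtie (restrict_data B) = B"
    if "is_strict_twilled s1 s2 B" for B
  proof -
    interpret twl s1 s2 B by (rule twl.intro) (rule assms(1) assms(2) that)+
    show ?thesis using restrict_mp bt_restrict by simp
  qed
  have bij: "bij_betw bowtie {m. is_matched_pair s1 s2 m} {B. is_strict_twilled s1 s2 B}"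
    unfolding bij_betw_def
  proof
    show "inj_on bowtie {m. is_matched_pair s1 s2 m}"
    proof (rule inj_onI)
      fix m m' assume "m \<in> {m. is_matched_pair s1 s2 m}" "m' \<in> {m. is_matched_pair s1 s2 m}"
        and e: "bowtie m = bowtie m'"
      then have "restrict_data (bowtie m) = m" "restrict_data (bowtie m') = m'" using left by blast+
      then show "m = m'" using e by metis
    qed
    show "bowtie ` {m. is_matched_pair s1 s2 m} = {B. is_strict_twilled s1 s2 B}"
    proof
      show "bowtie ` {m. is_matched_pair s1 s2 m} \<subseteq> {B. is_strict_twilled s1 s2 B}"
        using left by auto
      show "{B. is_strict_twilled s1 s2 B} \<subseteq> bowtie ` {m. is_matched_pair s1 s2 m}"
      proof
        fix B assume "B \<in> {B. is_strict_twilled s1 s2 B}"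
        then have "is_matched_pair s1 s2 (restrict_data B)" "bowtie (restrict_data B) = B"
          using right by auto
        then show "B \<in> bowtie ` {m. is_matched_pair s1 s2 m}" by (metis image_eqI mem_Collect_eq)
      qed
    qed
  qed
  show ?thesis using bij left right by blast
qed

end
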